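(* Let $(V,e)$ be a unital $\ast$-normed space. For $\varepsilon>0$ put $S_{\varepsilon}=V_{he}^{\ast}\cap\varepsilon\operatorname{ball}V^{\ast}$. Then for every $\varepsilon>1/\|e\|$ the unit ball of $V$ is equivalent to the absolute polar $S_{\varepsilon}^{\circ}$, i.e. there are reals $r,R>0$ with $rS_{\varepsilon}^{\circ}\subseteq\operatorname{ball}V\subseteq RS_{\varepsilon}^{\circ}$.
   Context: A $\ast$-normed space is a complex vector space $V$ with an involution $v\mapsto v^{\ast}$ and a norm with $\|v^{\ast}\|=\|v\|$ for all $v$. $V_h=\{v:v^{\ast}=v\}$. The dual $V^{\ast}$ carries the involution $\langle v,\varphi^{\ast}\rangle=\overline{\langle v^{\ast},\varphi\rangle}$; $V_h^{\ast}$ is the real space of bounded hermitian functionals ($\varphi^{\ast}=\varphi$). For a nonzero $e\in V_h$ put $V_{he}^{\ast}=\{y\in V_h^{\ast}:\langle e,y\rangle=1\}$ and $S=V_{he}^{\ast}\cap\operatorname{ball}V^{\ast}$. The element $e$ is a unit if $S\neq\varnothing$; then $(V,e)$ is called a unital $\ast$-normed space. For $A\subseteq V^{\ast}$, the absolute polar is $A^{\circ}=\{v\in V:|\langle v,a\rangle|\le 1\ \forall a\in A\}$. *)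

theory Defs
  imports "HOL-Analysis.Analysis"
begin

class scaleC =
  fixes scaleC :: "complex \<Rightarrow> 'a \<Rightarrow> 'a" (infixr \<open>*\<^sub>C\<close> 75)

class complex_vector = scaleC + real_vector +
  assumes scaleC_add_right: "a *\<^sub>C (x + y) = a *\<^sub>C x + a *\<^sub>C y"
    and scaleC_add_left: "(a + b) *\<^sub>C x = a *\<^sub>C x + b *\<^sub>C x"
    and scaleC_scaleC: "a *\<^sub>C (b *\<^sub>C x) = (a * b) *\<^sub>C x"
    and scaleC_one: "1 *\<^sub>C x = x"
    and scaleR_scaleC: "r *\<^sub>R x = (complex_of_real r) *\<^sub>C x"

class complex_normed_vector = complex_vector + real_normed_vector +
  assumes norm_scaleC: "norm (a *\<^sub>C x) = cmod a * norm x"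

definition star_normed :: "('v::complex_normed_vector \<Rightarrow> 'v) \<Rightarrow> bool" where
  "star_normed invol \<longleftrightarrow>
     (\<forall>x y. invol (x + y) = invol x + invol y) \<and>
     (\<forall>c x. invol (c *\<^sub>C x) = cnj c *\<^sub>C invol x) \<and>
     (\<forall>x. invol (invol x) = x) \<and>
     (\<forall>x. norm (invol x) = norm x)"

definition bounded_cfunctional :: "('v::complex_normed_vector \<Rightarrow> complex) \<Rightarrow> bool" where
  "bounded_cfunctional f \<longleftrightarrow>
     (\<forall>x y. f (x + y) = f x + f y) \<and>
     (\<forall>c x. f (c *\<^sub>C x) = c * f x) \<and>
     (\<exists>K. \<forall>x. cmod (f x) \<le> norm x * K)"

definition dual_star :: "('v \<Rightarrow> 'v) \<Rightarrow> ('v \<Rightarrow> complex) \<Rightarrow> ('v \<Rightarrow> complex)" where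
  "dual_star invol f = (\<lambda>v. cnj (f (invol v)))"

definition herm_dual :: "('v::complex_normed_vector \<Rightarrow> 'v) \<Rightarrow> ('v \<Rightarrow> complex) set" where
  "herm_dual invol = {f. bounded_cfunctional f \<and> dual_star invol f = f}"

definition herm_dual_e :: "('v::complex_normed_vector \<Rightarrow> 'v) \<Rightarrow> 'v \<Rightarrow> ('v \<Rightarrow> complex) set" where
  "herm_dual_e invol e = {f \<in> herm_dual invol. f e = 1}"

definition dual_ball :: "real \<Rightarrow> ('v::complex_normed_vector \<Rightarrow> complex) set" where
  "dual_ball \<epsilon> = {f. bounded_cfunctional f \<and> onorm f \<le> \<epsilon>}"

definition S_eps :: "('v::complex_normed_vector \<Rightarrow> 'v) \<Rightarrow> 'v \<Rightarrow> real \<Rightarrow> ('v \<Rightarrow> complex) set" where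
  "S_eps invol e \<epsilon> = herm_dual_e invol e \<inter> dual_ball \<epsilon>"

definition is_unit :: "('v::complex_normed_vector \<Rightarrow> 'v) \<Rightarrow> 'v \<Rightarrow> bool" where
  "is_unit invol e \<longleftrightarrow> e \<noteq> 0 \<and> invol e = e \<and> S_eps invol e 1 \<noteq> {}"

definition abs_polar :: "('v \<Rightarrow> complex) set \<Rightarrow> 'v set" where
  "abs_polar A = {v. \<forall>a\<in>A. cmod (a v) \<le> 1}"

end

theory Submission
  imports Defs
begin

definition hb_ok :: "'a::real_normed_vector \<Rightarrow> ('a \<times> real) set \<Rightarrow> bool" where
 "hb_ok x0 G \<longleftrightarrow> (\<forall>x a b. (x,a)\<in>G \<longrightarrow> (x,b)\<in>G \<longrightarrow> a=b) \<and> (0,0)\<in>G \<and>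
   (\<forall>x a y b. (x,a)\<in>G \<longrightarrow> (y,b)\<in>G \<longrightarrow> (x+y,a+b)\<in>G) \<and>
   (\<forall>x a c. (x,a)\<in>G \<longrightarrow> (c *\<^sub>R x, c*a)\<in>G) \<and>
   (\<forall>x a. (x,a)\<in>G \<longrightarrow> a \<le> norm x) \<and> (x0, norm x0)\<in>G"

lemma hb_base:
  fixes x0 :: "'a::real_normed_vector"
  assumes "x0 \<noteq> 0"
  shows "hb_ok x0 {(c *\<^sub>R x0, c * norm x0) | c. True}"
proof -
  have fq: "a = b" if "c *\<^sub>R x0 = d *\<^sub>R x0" "a = c * norm x0" "b = d * norm x0" for a b c d
  proof -
    have "(c - d) *\<^sub>R x0 = 0" using that(1) by (simp add: scaleR_diff_left)
    then have "c = d" using assms by simp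
    then show ?thesis using that by simp
  qed
  show ?thesis unfolding hb_ok_def
  proof (intro conjI allI impI)
    show "(0, 0) \<in> {(c *\<^sub>R x0, c * norm x0) |c. True}" by (rule CollectI, rule exI[of _ 0]) simp
    show "(x0, norm x0) \<in> {(c *\<^sub>R x0, c * norm x0) |c. True}" by (rule CollectI, rule exI[of _ 1]) simp
  next
    fix x a b assume "(x,a) \<in> {(c *\<^sub>R x0, c * norm x0) |c. True}" "(x,b) \<in> {(c *\<^sub>R x0, c * norm x0) |c. True}"
    then show "a = b" using fq by auto
  next
    fix x a y b assume "(x,a) \<in> {(c *\<^sub>R x0, c * norm x0) |c. True}" "(y,b) \<in> {(c *\<^sub>R x0, c * norm x0) |c. True}"
    then obtain c d where "x = c *\<^sub>R x0" "a = c * norm x0" "y = d *\<^sub>R x0" "b = d * norm x0" by auto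
    then show "(x + y, a + b) \<in> {(c *\<^sub>R x0, c * norm x0) |c. True}"
      by (intro CollectI exI[of _ "c+d"]) (simp add: scaleR_add_left algebra_simps)
  next
    fix x a e assume "(x,a) \<in> {(c *\<^sub>R x0, c * norm x0) |c. True}"
    then obtain c where "x = c *\<^sub>R x0" "a = c * norm x0" by auto
    then show "(e *\<^sub>R x, e * a) \<in> {(c *\<^sub>R x0, c * norm x0) |c. True}"
      by (intro CollectI exI[of _ "e*c"]) simp
  next
    fix x a assume "(x,a) \<in> {(c *\<^sub>R x0, c * norm x0) |c. True}"
    then obtain c where "x = c *\<^sub>R x0" "a = c * norm x0" by auto
    then show "a \<le> norm x" by (simp add: mult_right_mono)
  qed
qed

lemma hb_chain:
  assumes "C \<in> chains {G. hb_ok x0 G}" "C \<noteq> {}"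
  shows "hb_ok x0 (\<Union>C)"
proof -
  have ok: "\<And>G. G \<in> C \<Longrightarrow> hb_ok x0 G" using assms(1) by (auto simp: chains_def)
  have ch: "\<And>G H. G \<in> C \<Longrightarrow> H \<in> C \<Longrightarrow> G \<subseteq> H \<or> H \<subseteq> G" using assms(1) by (auto simp: chains_def chain_subset_def)
  have two: "\<exists>K\<in>C. p \<in> K \<and> q \<in> K" if pq: "p \<in> \<Union>C" "q \<in> \<Union>C" for p q
  proof -
    obtain G H where "G\<in>C" "H\<in>C" "p\<in>G" "q\<in>H" using pq by (meson UnionE)
    then show ?thesis using ch[of G H] by blast
  qed
  obtain G0 where "G0 \<in> C" using assms(2) by auto
  show ?thesis unfolding hb_ok_def
  proof (intro conjI allI impI)
    fix x a b assume "(x,a) \<in> \<Union>C" "(x,b) \<in> \<Union>C"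
    then obtain K where "K\<in>C" "(x,a)\<in>K" "(x,b)\<in>K" using two by blast
    then show "a = b" using ok[of K] unfolding hb_ok_def by blast
  next
    show "(0,0) \<in> \<Union>C" using \<open>G0\<in>C\<close> ok[of G0] unfolding hb_ok_def by blast
    show "(x0, norm x0) \<in> \<Union>C" using \<open>G0\<in>C\<close> ok[of G0] unfolding hb_ok_def by blast
  next
    fix x a y b assume "(x,a) \<in> \<Union>C" "(y,b) \<in> \<Union>C"
    then obtain K where "K\<in>C" "(x,a)\<in>K" "(y,b)\<in>K" using two by blast
    then show "(x+y,a+b) \<in> \<Union>C" using ok[of K] unfolding hb_ok_def by blast
  next
    fix x a c assume "(x,a) \<in> \<Union>C"
    then obtain K where "K\<in>C" "(x,a)\<in>K" by blast
    then show "(c *\<^sub>R x, c*a) \<in> \<Union>C" using ok[of K] unfolding hb_ok_def by blast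
  next
    fix x a assume "(x,a) \<in> \<Union>C"
    then obtain K where "K\<in>C" "(x,a)\<in>K" by blast
    then show "a \<le> norm x" using ok[of K] unfolding hb_ok_def by blast
  qed
qed

lemma hb_extend:
  fixes x0 :: "'a::real_normed_vector"
  assumes ok: "hb_ok x0 G" and zn: "z \<notin> fst ` G"
  shows "\<exists>G'. hb_ok x0 G' \<and> G \<subseteq> G' \<and> G' \<noteq> G"
proof -
  have F: "\<And>x a b. (x,a)\<in>G \<Longrightarrow> (x,b)\<in>G \<Longrightarrow> a=b" using ok unfolding hb_ok_def by blast
  have Z: "(0,0)\<in>G" using ok unfolding hb_ok_def by blast
  have P: "\<And>x a y b. (x,a)\<in>G \<Longrightarrow> (y,b)\<in>G \<Longrightarrow> (x+y,a+b)\<in>G" using ok unfolding hb_ok_def by blast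
  have S: "\<And>x a c. (x,a)\<in>G \<Longrightarrow> (c *\<^sub>R x, c*a)\<in>G" using ok unfolding hb_ok_def by blast
  have N: "\<And>x a. (x,a)\<in>G \<Longrightarrow> a \<le> norm x" using ok unfolding hb_ok_def by blast
  have X: "(x0, norm x0)\<in>G" using ok unfolding hb_ok_def by blast
  define A where "A = {b - norm (m - z) | m b. (m,b)\<in>G}"
  define a where "a = Sup A"
  have Ane: "A \<noteq> {}" using Z unfolding A_def by blast
  have key: "b - norm (m - z) \<le> norm (m' + z) - b'" if "(m,b)\<in>G" "(m',b')\<in>G" for m b m' b'
  proof -
    have "b + b' \<le> norm (m + m')" using N[OF P[OF that]] .
    also have "m + m' = (m - z) + (m' + z)" by simp
    also have "norm \<dots> \<le> norm (m - z) + norm (m' + z)" by (rule norm_triangle_ineq)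
    finally show ?thesis by simp
  qed
  have bdd: "bdd_above A" unfolding A_def bdd_above_def using key[OF _ Z] by auto
  have lo: "b - norm (m - z) \<le> a" if "(m,b)\<in>G" for m b
    unfolding a_def by (rule cSup_upper[OF _ bdd]) (use that in \<open>auto simp: A_def\<close>)
  have hi: "a \<le> norm (m' + z) - b'" if "(m',b')\<in>G" for m' b'
    unfolding a_def by (rule cSup_least[OF Ane]) (use key that in \<open>auto simp: A_def\<close>)
  define G' where "G' = {(m + t *\<^sub>R z, b + t*a) | m b t. (m,b)\<in>G}"
  have inG': "(m + t *\<^sub>R z, b + t*a) \<in> G'" if "(m,b)\<in>G" for m b t
    unfolding G'_def using that by blast
  have zG: "(x, c) \<in> G \<Longrightarrow> x \<noteq> z" for x c using zn by force
  have ok': "hb_ok x0 G'" unfolding hb_ok_def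
  proof (intro conjI allI impI)
    fix x p q assume "(x,p)\<in>G'" "(x,q)\<in>G'"
    then obtain m b t m' b' t' where 1: "(m,b)\<in>G" "x = m + t *\<^sub>R z" "p = b + t*a"
      and 2: "(m',b')\<in>G" "x = m' + t' *\<^sub>R z" "q = b' + t'*a" unfolding G'_def by blast
    have d: "(m - m', b - b') \<in> G" using P[OF 1(1) S[OF 2(1), of "-1"]] by simp
    have tt: "t = t'"
    proof (rule ccontr)
      assume "t \<noteq> t'"
      have "m - m' = (t' - t) *\<^sub>R z" using 1(2) 2(2) by (simp add: algebra_simps)
      then have "(1/(t'-t)) *\<^sub>R (m - m') = z" using \<open>t \<noteq> t'\<close> by simp
      then show False using S[OF d, of "1/(t'-t)"] zG by blast
    qed
    then have "m = m'" using 1(2) 2(2) by simp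
    then have "b = b'" using F 1(1) 2(1) by blast
    then show "p = q" using 1 2 tt by simp
  next
    show "(0,0) \<in> G'" using inG'[OF Z, of 0] by simp
    show "(x0, norm x0) \<in> G'" using inG'[OF X, of 0] by simp
  next
    fix x p y q assume "(x,p)\<in>G'" "(y,q)\<in>G'"
    then obtain m b t m' b' t' where 1: "(m,b)\<in>G" "x = m + t *\<^sub>R z" "p = b + t*a"
      and 2: "(m',b')\<in>G" "y = m' + t' *\<^sub>R z" "q = b' + t'*a" unfolding G'_def by blast
    show "(x+y, p+q) \<in> G'" using inG'[OF P[OF 1(1) 2(1)], of "t+t'"] 1 2
      by (simp add: algebra_simps scaleR_add_left)
  next
    fix x p c assume "(x,p)\<in>G'"
    then obtain m b t where 1: "(m,b)\<in>G" "x = m + t *\<^sub>R z" "p = b + t*a" unfolding G'_def by blast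
    show "(c *\<^sub>R x, c*p) \<in> G'" using inG'[OF S[OF 1(1), of c], of "c*t"] 1
      by (simp add: algebra_simps scaleR_add_right)
  next
    fix x p assume "(x,p)\<in>G'"
    then obtain m b t where 1: "(m,b)\<in>G" "x = m + t *\<^sub>R z" "p = b + t*a" unfolding G'_def by blast
    consider "t = 0" | "t > 0" | "t < 0" by linarith
    then show "p \<le> norm x"
    proof cases
      case 1 then show ?thesis using N \<open>(m,b)\<in>G\<close> \<open>x = _\<close> \<open>p = _\<close> by simp
    next
      case 2
      have "a \<le> norm ((1/t) *\<^sub>R m + z) - (1/t)*b" using hi[OF S[OF 1(1), of "1/t"]] .
      then have "t * a \<le> t * (norm ((1/t) *\<^sub>R m + z) - (1/t)*b)" using 2
        by (intro mult_left_mono) auto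
      also have "\<dots> = t * norm ((1/t) *\<^sub>R m + z) - b" using 2 by (simp add: right_diff_distrib)
      finally have "t * a \<le> t * norm ((1/t) *\<^sub>R m + z) - b" .
      also have "t * norm ((1/t) *\<^sub>R m + z) = norm (t *\<^sub>R ((1/t) *\<^sub>R m + z))" using 2 by simp
      also have "t *\<^sub>R ((1/t) *\<^sub>R m + z) = m + t *\<^sub>R z" using 2 by (simp add: scaleR_add_right)
      finally show ?thesis using 1 by simp
    next
      case 3
      define s where "s = -t"
      have s: "s > 0" using 3 s_def by simp
      have "(1/s)*b - norm ((1/s) *\<^sub>R m - z) \<le> a" using lo[OF S[OF 1(1), of "1/s"]] .
      then have "s * ((1/s)*b - norm ((1/s) *\<^sub>R m - z)) \<le> s * a" using s
        by (intro mult_left_mono) auto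
      moreover have "s * ((1/s)*b - norm ((1/s) *\<^sub>R m - z)) = b - s * norm ((1/s) *\<^sub>R m - z)" using s by (simp add: right_diff_distrib)
      ultimately have "b - s * norm ((1/s) *\<^sub>R m - z) \<le> s * a" by simp
      also have "s * norm ((1/s) *\<^sub>R m - z) = norm (s *\<^sub>R ((1/s) *\<^sub>R m - z))" using s by simp
      also have "s *\<^sub>R ((1/s) *\<^sub>R m - z) = m + t *\<^sub>R z" using s s_def by (simp add: scaleR_diff_right)
      finally show ?thesis using 1 s_def by simp
    qed
  qed
  have sub: "G \<subseteq> G'"
  proof
    fix p assume "p \<in> G" then obtain m b where "p = (m,b)" "(m,b)\<in>G" by (cases p) auto
    then show "p \<in> G'" using inG'[of m b 0] by simp
  qed
  have "(z, a) \<in> G'" using inG'[OF Z, of 1] by simp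
  moreover have "(z, a) \<notin> G" using zn by force
  ultimately show ?thesis using ok' sub by blast
qed

lemma hb_real:
  fixes x0 :: "'a::real_normed_vector"
  assumes "x0 \<noteq> 0"
  shows "\<exists>g. (\<forall>x y. g (x + y) = g x + g y) \<and> (\<forall>c x. g (c *\<^sub>R x) = c * g x) \<and>
             (\<forall>x. \<bar>g x\<bar> \<le> norm x) \<and> g x0 = norm x0"
proof -
  have "\<exists>M\<in>{G. hb_ok x0 G}. \<forall>X\<in>{G. hb_ok x0 G}. M \<subseteq> X \<longrightarrow> X = M"
  proof (rule Zorn_Lemma2, intro ballI)
    fix C assume C: "C \<in> chains {G. hb_ok x0 G}"
    show "\<exists>U\<in>{G. hb_ok x0 G}. \<forall>X\<in>C. X \<subseteq> U"
    proof (cases "C = {}")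
      case True then show ?thesis using hb_base[OF assms] by blast
    next
      case False then show ?thesis using hb_chain[OF C] by blast
    qed
  qed
  then obtain G where ok: "hb_ok x0 G" and mx: "\<And>X. hb_ok x0 X \<Longrightarrow> G \<subseteq> X \<Longrightarrow> X = G" by blast
  have F: "\<And>x a b. (x,a)\<in>G \<Longrightarrow> (x,b)\<in>G \<Longrightarrow> a=b" using ok unfolding hb_ok_def by blast
  have P: "\<And>x a y b. (x,a)\<in>G \<Longrightarrow> (y,b)\<in>G \<Longrightarrow> (x+y,a+b)\<in>G" using ok unfolding hb_ok_def by blast
  have S: "\<And>x a c. (x,a)\<in>G \<Longrightarrow> (c *\<^sub>R x, c*a)\<in>G" using ok unfolding hb_ok_def by blast
  have N: "\<And>x a. (x,a)\<in>G \<Longrightarrow> a \<le> norm x" using ok unfolding hb_ok_def by blast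
  have X: "(x0, norm x0)\<in>G" using ok unfolding hb_ok_def by blast
  have tot: "\<exists>a. (x,a) \<in> G" for x
  proof (rule ccontr)
    assume "\<nexists>a. (x, a) \<in> G"
    then have "x \<notin> fst ` G" by force
    then show False using hb_extend[OF ok] mx by blast
  qed
  define g where "g x = (SOME a. (x,a) \<in> G)" for x
  have gG: "(x, g x) \<in> G" for x unfolding g_def using tot[of x] by (rule someI_ex)
  have gv: "(x,a) \<in> G \<Longrightarrow> g x = a" for x a using F gG by blast
  show ?thesis
  proof (intro exI[of _ g] conjI allI)
    fix x y show "g (x + y) = g x + g y" using gv[OF P[OF gG gG]] .
  next
    fix c x show "g (c *\<^sub>R x) = c * g x" using gv[OF S[OF gG]] .
  next
    fix x
    have "g x \<le> norm x" using N[OF gG] .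
    moreover have "- g x \<le> norm x" using N[OF S[OF gG[of x], of "-1"]] by simp
    ultimately show "\<bar>g x\<bar> \<le> norm x" by linarith
  next
    show "g x0 = norm x0" using gv[OF X] .
  qed
qed


lemma scaleC_decomp:
  fixes y :: "'v::complex_vector"
  shows "c *\<^sub>C y = Re c *\<^sub>R y + Im c *\<^sub>R (\<i> *\<^sub>C y)"
proof -
  have "c = complex_of_real (Re c) + complex_of_real (Im c) * \<i>"
    by (simp add: complex_eq_iff)
  then have "c *\<^sub>C y = complex_of_real (Re c) *\<^sub>C y + complex_of_real (Im c) *\<^sub>C (\<i> *\<^sub>C y)"
    by (metis scaleC_add_left scaleC_scaleC)
  then show ?thesis by (simp add: scaleR_scaleC)
qed

lemma cnj_sgn_mult: "cnj (sgn z) * z = complex_of_real (cmod z)"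
proof (cases "z = 0")
  case True then show ?thesis by simp
next
  case False
  have "cnj (sgn z) * z = (z * cnj z) / complex_of_real (cmod z)"
    by (simp add: sgn_eq complex_cnj_divide)
  also have "z * cnj z = complex_of_real ((cmod z)^2)" using complex_norm_square[of z] by simp
  also have "complex_of_real ((cmod z)^2) / complex_of_real (cmod z) = complex_of_real (cmod z)"
    using False by (simp add: power2_eq_square)
  finally show ?thesis .
qed

definition clin :: "('v::complex_vector \<Rightarrow> complex) \<Rightarrow> bool" where
  "clin f \<longleftrightarrow> (\<forall>x y. f (x + y) = f x + f y) \<and> (\<forall>c x. f (c *\<^sub>C x) = c * f x)"

lemma hb_complex:
  fixes x0 :: "'v::complex_normed_vector"
  assumes "x0 \<noteq> 0"
  shows "\<exists>G. clin G \<and> (\<forall>x. cmod (G x) \<le> norm x) \<and> G x0 = complex_of_real (norm x0)"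
proof -
  obtain g :: "'v \<Rightarrow> real" where gg: "(\<forall>x y. g (x + y) = g x + g y) \<and> (\<forall>c x. g (c *\<^sub>R x) = c * g x) \<and>
             (\<forall>x. \<bar>g x\<bar> \<le> norm x) \<and> g x0 = norm x0"
    using hb_real[OF assms] by (elim exE) (rule that)
  have ga: "\<And>x y. g (x + y) = g x + g y" using gg by blast
  have gs: "\<And>c x. g (c *\<^sub>R x) = c * g x" using gg by blast
  have gb: "\<And>x. \<bar>g x\<bar> \<le> norm x" using gg by blast
  have g0: "g x0 = norm x0" using gg by blast
  define G where "G y = Complex (g y) (- g (\<i> *\<^sub>C y))" for y
  have gc: "g (c *\<^sub>C y) = Re c * g y + Im c * g (\<i> *\<^sub>C y)" for c y
    by (subst scaleC_decomp) (simp only: ga gs)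
  have lin: "clin G" unfolding clin_def
  proof (intro conjI allI)
    fix x y show "G (x + y) = G x + G y" by (simp add: G_def ga scaleC_add_right complex_eq_iff)
  next
    fix c x
    have e1: "g (c *\<^sub>C x) = Re c * g x + Im c * g (\<i> *\<^sub>C x)" by (rule gc)
    have e2: "g (\<i> *\<^sub>C (c *\<^sub>C x)) = - Im c * g x + Re c * g (\<i> *\<^sub>C x)"
      using gc[of "\<i>*c" x] by (simp add: scaleC_scaleC)
    show "G (c *\<^sub>C x) = c * G x"
      by (simp add: G_def e1 e2 complex_eq_iff algebra_simps)
  qed
  have GC: "G (c *\<^sub>C x) = c * G x" for c x using lin unfolding clin_def by blast
  have ReG: "Re (G y) = g y" for y by (simp add: G_def)
  have bnd: "cmod (G y) \<le> norm y" for y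
  proof (cases "G y = 0")
    case True then show ?thesis by simp
  next
    case False
    define w where "w = cnj (sgn (G y)) *\<^sub>C y"
    have "G w = cnj (sgn (G y)) * G y" unfolding w_def by (rule GC)
    also have "\<dots> = complex_of_real (cmod (G y))"
      by (rule cnj_sgn_mult)
    finally have "cmod (G y) = g w" using ReG[of w] by simp
    also have "\<dots> \<le> norm w" using gb[of w] by simp
    also have "norm w = norm y" unfolding w_def using False by (simp add: norm_scaleC norm_sgn)
    finally show ?thesis .
  qed
  have "G x0 = complex_of_real (norm x0)"
  proof -
    have r: "Re (G x0) = norm x0" using ReG g0 by simp
    have "(cmod (G x0))^2 \<le> (norm x0)^2" using bnd[of x0] by (simp add: power_mono)
    then have "(Re (G x0))^2 + (Im (G x0))^2 \<le> (norm x0)^2" by (simp add: cmod_power2)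
    then have "Im (G x0) = 0" using r by simp
    then show ?thesis using r by (simp add: complex_eq_iff)
  qed
  then show ?thesis using lin bnd by blast
qed


lemma star_props:
  assumes "star_normed invol"
  shows "invol (x + y) = invol x + invol y" "invol (c *\<^sub>C x) = cnj c *\<^sub>C invol x"
    "invol (invol x) = x" "norm (invol x) = norm x"
  using assms unfolding star_normed_def by blast+

lemma clin_bounded:
  assumes "clin f" "\<And>y. cmod (f y) \<le> B * norm y"
  shows "bounded_cfunctional f"
  using assms unfolding clin_def bounded_cfunctional_def by (metis mult.commute)

lemma bcf_onorm:
  assumes "bounded_cfunctional f"
  shows "cmod (f y) \<le> onorm f * norm y"
proof -
  have a: "\<And>x y. f (x + y) = f x + f y" and c: "\<And>c x. f (c *\<^sub>C x) = c * f x"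
    and "\<exists>K. \<forall>x. cmod (f x) \<le> norm x * K" using assms unfolding bounded_cfunctional_def by blast+
  then obtain K where K: "\<And>x. cmod (f x) \<le> norm x * K" by blast
  have "bounded_linear f"
  proof (rule bounded_linear_intro[OF a _ K])
    fix r x show "f (r *\<^sub>R x) = r *\<^sub>R f x" by (simp add: scaleR_scaleC c scaleR_conv_of_real)
  qed
  then show ?thesis by (rule onorm)
qed

lemma in_S:
  assumes "clin f" "\<And>y. cmod (f y) \<le> B * norm y" "0 \<le> B" "B \<le> \<epsilon>"
    "\<And>y. cnj (f (invol y)) = f y" "f e = 1"
  shows "f \<in> S_eps invol e \<epsilon>"
proof -
  have bc: "bounded_cfunctional f" using clin_bounded assms(1,2) .
  have "onorm f \<le> B" by (rule onorm_bound) (use assms in auto)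
  then show ?thesis using bc assms(4,5,6)
    unfolding S_eps_def herm_dual_e_def herm_dual_def dual_ball_def dual_star_def by auto
qed

lemma S_bound:
  assumes "f \<in> S_eps invol e \<epsilon>"
  shows "cmod (f y) \<le> \<epsilon> * norm y"
proof -
  have "bounded_cfunctional f" "onorm f \<le> \<epsilon>" using assms
    unfolding S_eps_def herm_dual_e_def herm_dual_def dual_ball_def by auto
  then show ?thesis using bcf_onorm[of f y] by (meson mult_right_mono norm_ge_zero order_trans)
qed


lemma herm_parts:
  assumes st: "star_normed invol" and G: "clin G" "\<And>y. cmod (G y) \<le> norm y"
  shows "\<exists>H1 H2. clin H1 \<and> clin H2 \<and> (\<forall>y. cnj (H1 (invol y)) = H1 y) \<and> (\<forall>y. cnj (H2 (invol y)) = H2 y)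
     \<and> (\<forall>y. cmod (H1 y) \<le> norm y) \<and> (\<forall>y. cmod (H2 y) \<le> norm y) \<and> (\<forall>y. G y = H1 y + \<i> * H2 y)"
proof -
  note s = star_props[OF st]
  have ga: "G (x + y) = G x + G y" and gc: "G (c *\<^sub>C x) = c * G x" for x y c
    using G(1) unfolding clin_def by blast+
  define H1 where "H1 y = (G y + cnj (G (invol y))) / 2" for y
  define H2 where "H2 y = (G y - cnj (G (invol y))) / (2 * \<i>)" for y
  have b2: "cmod (G y) + cmod (cnj (G (invol y))) \<le> 2 * norm y" for y
    using G(2)[of y] G(2)[of "invol y"] s(4)[of y] by simp
  have "clin H1" unfolding clin_def H1_def by (simp add: s ga gc field_simps)
  moreover have "clin H2" unfolding clin_def H2_def by (simp add: s ga gc field_simps)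
  moreover have "\<forall>y. cnj (H1 (invol y)) = H1 y" by (simp add: H1_def s)
  moreover have "\<forall>y. cnj (H2 (invol y)) = H2 y" by (simp add: H2_def s field_simps)
  moreover have "\<forall>y. cmod (H1 y) \<le> norm y"
  proof
    fix y
    have "cmod (H1 y) = cmod (G y + cnj (G (invol y))) / 2" by (simp add: H1_def norm_divide)
    also have "\<dots> \<le> (cmod (G y) + cmod (cnj (G (invol y)))) / 2"
      by (intro divide_right_mono norm_triangle_ineq) simp
    finally show "cmod (H1 y) \<le> norm y" using b2[of y] by simp
  qed
  moreover have "\<forall>y. cmod (H2 y) \<le> norm y"
  proof
    fix y
    have "cmod (H2 y) = cmod (G y - cnj (G (invol y))) / 2" by (simp add: H2_def norm_divide norm_mult)
    also have "\<dots> \<le> (cmod (G y) + cmod (cnj (G (invol y)))) / 2"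
      by (intro divide_right_mono norm_triangle_ineq4) simp
    finally show "cmod (H2 y) \<le> norm y" using b2[of y] by simp
  qed
  moreover have "\<forall>y. G y = H1 y + \<i> * H2 y" by (simp add: H1_def H2_def field_simps)
  ultimately show ?thesis by blast
qed

lemma herm_real:
  assumes "cnj (H (invol e)) = H e" "invol e = e"
  shows "cnj (H e) = H e" "Im (H e) = 0"
  using assms by (metis, metis Reals_cnj_iff complex_is_Real_iff)


theorem theorem4p3:
  fixes invol :: "'v::complex_normed_vector \<Rightarrow> 'v" and e :: 'v and \<epsilon> :: real
  assumes "star_normed invol"
    and "is_unit invol e"
    and "\<epsilon> > 1 / norm e"
  shows "\<exists>r R. r > 0 \<and> R > 0 \<and>
           (\<lambda>v. r *\<^sub>R v) ` abs_polar (S_eps invol e \<epsilon>) \<subseteq> cball 0 1 \<and>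
           cball 0 1 \<subseteq> (\<lambda>v. R *\<^sub>R v) ` abs_polar (S_eps invol e \<epsilon>)"
proof -
  note st = assms(1)
  note s = star_props[OF st]
  have e0: "e \<noteq> 0" and ee: "invol e = e" using assms(2) unfolding is_unit_def by auto
  have ne: "norm e > 0" using e0 by simp
  define \<delta> where "\<delta> = 1 / norm e"
  have d0: "\<delta> > 0" and de: "\<delta> < \<epsilon>" and dn: "norm e * \<delta> = 1" using ne assms(3) by (auto simp: \<delta>_def)
  obtain G0 where G0: "clin G0" "\<And>y. cmod (G0 y) \<le> norm y" "G0 e = complex_of_real (norm e)"
    using hb_complex[OF e0] by blast
  obtain H0 H0' where H0: "clin H0" "\<And>y. cnj (H0 (invol y)) = H0 y" "\<And>y. cmod (H0 y) \<le> norm y"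
    and H0'r: "\<And>y. cnj (H0' (invol y)) = H0' y" and GH: "\<And>y. G0 y = H0 y + \<i> * H0' y"
    using herm_parts[OF st G0(1,2)] by blast
  have "Im (H0 e) = 0" "Im (H0' e) = 0" using herm_real[of H0 invol e, OF H0(2) ee] herm_real[of H0' invol e, OF H0'r ee] by auto
  then have H0e: "H0 e = complex_of_real (norm e)" using G0(3) GH[of e] by (simp add: complex_eq_iff)
  define F0 where "F0 y = H0 y / complex_of_real (norm e)" for y
  have F0lin: "clin F0" using H0(1) unfolding clin_def F0_def by (simp add: add_divide_distrib)
  have F0h: "cnj (F0 (invol y)) = F0 y" for y using H0(2)[of y] by (simp add: F0_def)
  have F0e: "F0 e = 1" using H0e ne by (simp add: F0_def)
  have F0b: "cmod (F0 y) \<le> \<delta> * norm y" for y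
    using H0(3)[of y] ne by (simp add: F0_def norm_divide \<delta>_def divide_right_mono)
  have F0S: "F0 \<in> S_eps invol e \<epsilon>" using in_S[OF F0lin F0b] d0 de F0h F0e by simp
  define t where "t = (\<epsilon> - \<delta>) / 2"
  have t0: "t > 0" and te: "\<delta> + 2 * t = \<epsilon>" using de by (auto simp: t_def field_simps)
  define c where "c = t / (4 * (1 + t * norm e))"
  have p1: "0 < 1 + t * norm e" using t0 by (simp add: add_pos_nonneg)
  have c0: "c > 0" unfolding c_def using t0 p1 by (intro divide_pos_pos) auto
  have cq: "c * (1 + t * norm e) = t / 4" using p1 unfolding c_def by (simp add: field_simps)
  have main: "c * norm v \<le> 1" if v: "v \<in> abs_polar (S_eps invol e \<epsilon>)" for v
  proof -
    have pol: "\<And>f. f \<in> S_eps invol e \<epsilon> \<Longrightarrow> cmod (f v) \<le> 1" using v unfolding abs_polar_def by blast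
    show ?thesis
    proof (cases "c * norm v \<le> cmod (F0 v)")
      case True then show ?thesis using pol[OF F0S] by linarith
    next
      case False
      then have v0: "v \<noteq> 0" by auto
      obtain G where G: "clin G" "\<And>y. cmod (G y) \<le> norm y" "G v = complex_of_real (norm v)"
        using hb_complex[OF v0] by blast
      obtain H1 H2 where H1: "clin H1" "\<And>y. cnj (H1 (invol y)) = H1 y" "\<And>y. cmod (H1 y) \<le> norm y"
        and H2: "clin H2" "\<And>y. cnj (H2 (invol y)) = H2 y" "\<And>y. cmod (H2 y) \<le> norm y"
        and GH1: "\<And>y. G y = H1 y + \<i> * H2 y"
        using herm_parts[OF st G(1,2)] by blast
      have "norm v = cmod (H1 v + \<i> * H2 v)" using G(3) GH1[of v] by simp
      also have "\<dots> \<le> cmod (H1 v) + cmod (H2 v)" using norm_triangle_ineq[of "H1 v" "\<i> * H2 v"] by (simp add: norm_mult)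
      finally have "norm v \<le> cmod (H1 v) + cmod (H2 v)" .
      then obtain H where H: "clin H" "\<And>y. cnj (H (invol y)) = H y" "\<And>y. cmod (H y) \<le> norm y"
        and Hv: "norm v / 2 \<le> cmod (H v)"
      proof (cases "norm v / 2 \<le> cmod (H1 v)")
        case True then show ?thesis using that[OF H1] by blast
      next
        case False then show ?thesis using that[OF H2] \<open>norm v \<le> _\<close> by linarith
      qed
      have Hr: "cnj (H e) = H e" using herm_real[of H invol e, OF H(2) ee] by simp
      have Hl: "H (x + y) = H x + H y" "H (a *\<^sub>C x) = a * H x" for x y a using H(1) unfolding clin_def by blast+
      have F0l: "F0 (x + y) = F0 x + F0 y" "F0 (a *\<^sub>C x) = a * F0 x" for x y a using F0lin unfolding clin_def by blast+
      define F where "F y = F0 y + complex_of_real t * (H y - H e * F0 y)" for y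
      have Flin: "clin F" unfolding clin_def F_def by (simp add: Hl F0l algebra_simps)
      have Fh: "cnj (F (invol y)) = F y" for y
        by (simp add: F_def F0h H(2) Hr)
      have Fe: "F e = 1" by (simp add: F_def F0e)
      have Heb: "cmod (H e) \<le> norm e" by (rule H(3))
      have Fb: "cmod (F y) \<le> \<epsilon> * norm y" for y
      proof -
        have "cmod (F y) \<le> cmod (F0 y) + t * cmod (H y - H e * F0 y)"
          unfolding F_def using t0 norm_triangle_ineq[of "F0 y" "complex_of_real t * (H y - H e * F0 y)"]
          by (simp add: norm_mult)
        moreover have "cmod (H y - H e * F0 y) \<le> cmod (H y) + cmod (H e) * cmod (F0 y)"
          using norm_triangle_ineq4[of "H y" "H e * F0 y"] by (simp add: norm_mult)
        moreover have "cmod (H e) * cmod (F0 y) \<le> norm e * (\<delta> * norm y)"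
          using Heb F0b[of y] by (intro mult_mono) auto
        moreover have "norm e * (\<delta> * norm y) = norm y" using dn by (simp add: mult.assoc[symmetric])
        ultimately have "cmod (F y) \<le> \<delta> * norm y + t * (2 * norm y)"
          using F0b[of y] H(3)[of y] t0
          by (smt (verit, best) mult_left_mono)
        then show ?thesis using te by (simp add: algebra_simps flip: te)
      qed
      have FS: "F \<in> S_eps invol e \<epsilon>" using in_S[OF Flin Fb] d0 de Fh Fe by simp
      have Fv: "complex_of_real t * H v = F v - F0 v * (1 - complex_of_real t * H e)"
        by (simp add: F_def algebra_simps)
      have "t * cmod (H v) = cmod (complex_of_real t * H v)" using t0 by (simp add: norm_mult)
      also have "\<dots> = cmod (F v - F0 v * (1 - complex_of_real t * H e))" using Fv by simp
      also have "\<dots> \<le> cmod (F v) + cmod (F0 v) * cmod (1 - complex_of_real t * H e)"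
        using norm_triangle_ineq4[of "F v" "F0 v * (1 - complex_of_real t * H e)"] by (simp add: norm_mult)
      finally have "t * cmod (H v) \<le> cmod (F v) + cmod (F0 v) * cmod (1 - complex_of_real t * H e)" .
      moreover have "cmod (1 - complex_of_real t * H e) \<le> 1 + t * norm e"
        using norm_triangle_ineq4[of 1 "complex_of_real t * H e"] t0 Heb
        by (simp add: norm_mult) (smt (verit) mult_left_mono)
      moreover have "cmod (F0 v) * cmod (1 - complex_of_real t * H e) \<le> c * norm v * (1 + t * norm e)"
        using False calculation(2) c0 by (intro mult_mono) auto
      moreover have "c * norm v * (1 + t * norm e) = t / 4 * norm v" by (subst cq[symmetric]) (simp only: mult_ac)
      moreover have "t * (norm v / 2) \<le> t * cmod (H v)" using Hv t0 by simp
      moreover have "c * norm v \<le> t / 4 * norm v"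
      proof -
        have "c * 1 \<le> c * (1 + t * norm e)" using c0 t0 by (intro mult_left_mono) auto
        then have "c \<le> t / 4" using cq by simp
        then show ?thesis by (intro mult_right_mono) auto
      qed
      ultimately have "c * norm v \<le> cmod (F v)" by (simp add: algebra_simps)
      then show ?thesis using pol[OF FS] by linarith
    qed
  qed
  have e0': "\<epsilon> > 0" using d0 de by simp
  have A: "(\<lambda>v. c *\<^sub>R v) ` abs_polar (S_eps invol e \<epsilon>) \<subseteq> cball 0 1"
  proof
    fix x assume "x \<in> (\<lambda>v. c *\<^sub>R v) ` abs_polar (S_eps invol e \<epsilon>)"
    then obtain v where "x = c *\<^sub>R v" "v \<in> abs_polar (S_eps invol e \<epsilon>)" by blast
    then show "x \<in> cball 0 1" using main c0 by simp
  qed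
  have B: "cball 0 1 \<subseteq> (\<lambda>v. \<epsilon> *\<^sub>R v) ` abs_polar (S_eps invol e \<epsilon>)"
  proof
    fix x :: 'v assume x: "x \<in> cball 0 1"
    have "(1/\<epsilon>) *\<^sub>R x \<in> abs_polar (S_eps invol e \<epsilon>)"
      unfolding abs_polar_def
    proof (intro CollectI ballI)
      fix f assume "f \<in> S_eps invol e \<epsilon>"
      then have "cmod (f ((1/\<epsilon>) *\<^sub>R x)) \<le> \<epsilon> * norm ((1/\<epsilon>) *\<^sub>R x)" by (rule S_bound)
      also have "\<dots> = norm x" using e0' by simp
      finally show "cmod (f ((1/\<epsilon>) *\<^sub>R x)) \<le> 1" using x by simp
    qed
    moreover have "x = \<epsilon> *\<^sub>R ((1/\<epsilon>) *\<^sub>R x)" using e0' by simp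
    ultimately show "x \<in> (\<lambda>v. \<epsilon> *\<^sub>R v) ` abs_polar (S_eps invol e \<epsilon>)" by blast
  qed
  show ?thesis using A B c0 e0' by blast
qed


end
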